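(* For each user $i$ let $r_i^{max}=W\log_2(1+k_iP_{max})$, and let user $k$ satisfy $r_k^{max}=\max_i r_i^{max}$. If $B_k/(P_{max}-C_k)\ge 1$, then there exists an optimal solution of the Sum Throughput Maximization Problem (STMP) defined in the context in which $\tau_k=1$, i.e., user $k$ is allocated the entire scheduling frame.
   Context: There are $N$ users, indexed $i=1,\dots,N$, transmitting to a hybrid access point by time division within a scheduling frame of normalized length $1$. Given constants: bandwidth $W>0$; for each user $i$, $k_i>0$, an energy harvesting rate $C_i\ge 0$, an initial battery level $B_i\ge 0$; and a maximum transmit power $P_{max}>0$. STMP is the problem maximize $\sum_{i=1}^{N} W\tau_i\log_2(1+k_iP_i)$ subject to, for all users $i$ (and all $j\neq i$ where relevant): $B_i+C_i\tau_0+C_i\sum_{j=1}^{N}a_{ji}\tau_j+C_i\tau_i-P_i\tau_i\ge 0$ (energy causality), $a_{ij}+a_{ji}=1$, $P_i\le P_{max}$, $\sum_{i=0}^{N}\tau_i\le 1$, over variables $P_i\ge 0$, $\tau_i\ge 0$ ($i=1,\dots,N$), $\tau_0\ge 0$, and $a_{ij}\in\{0,1\}$, where $P_i$ is the transmit power of user $i$, $\tau_i$ its transmission time, $a_{ij}=1$ iff user $i$ is scheduled before user $j$, and $\tau_0$ is an initial waiting time during which all users only harvest energy. *)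

theory Defs
  imports Complex_Main
begin

text \<open>Users are indexed by {1..N}. g i is the constant k_i of the paper (renamed to avoid a
clash with the distinguished user index k). a i j = 1 iff user i is scheduled before user j.\<close>

definition stmp_feasible ::
  "nat \<Rightarrow> (nat \<Rightarrow> real) \<Rightarrow> (nat \<Rightarrow> real) \<Rightarrow> real \<Rightarrow>
   (nat \<Rightarrow> real) \<Rightarrow> (nat \<Rightarrow> real) \<Rightarrow> real \<Rightarrow> (nat \<Rightarrow> nat \<Rightarrow> real) \<Rightarrow> bool" where
  "stmp_feasible N C B Pmax P tau tau0 a \<longleftrightarrow>
     tau0 \<ge> 0 \<and>
     (\<forall>i\<in>{1..N}.
        P i \<ge> 0 \<and> tau i \<ge> 0 \<and> P i \<le> Pmax \<and>
        B i + C i * tau0 + C i * (\<Sum>j\<in>{1..N} - {i}. a j i * tau j) + C i * tau i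
          - P i * tau i \<ge> 0 \<and>
        (\<forall>j\<in>{1..N}. j \<noteq> i \<longrightarrow> a i j \<in> {0, 1} \<and> a i j + a j i = 1)) \<and>
     tau0 + (\<Sum>i\<in>{1..N}. tau i) \<le> 1"

definition stmp_objective ::
  "nat \<Rightarrow> real \<Rightarrow> (nat \<Rightarrow> real) \<Rightarrow> (nat \<Rightarrow> real) \<Rightarrow> (nat \<Rightarrow> real) \<Rightarrow> real" where
  "stmp_objective N W g P tau = (\<Sum>i\<in>{1..N}. W * tau i * log 2 (1 + g i * P i))"

definition stmp_optimal ::
  "nat \<Rightarrow> real \<Rightarrow> (nat \<Rightarrow> real) \<Rightarrow> (nat \<Rightarrow> real) \<Rightarrow> (nat \<Rightarrow> real) \<Rightarrow> real \<Rightarrow>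
   (nat \<Rightarrow> real) \<Rightarrow> (nat \<Rightarrow> real) \<Rightarrow> real \<Rightarrow> (nat \<Rightarrow> nat \<Rightarrow> real) \<Rightarrow> bool" where
  "stmp_optimal N W g C B Pmax P tau tau0 a \<longleftrightarrow>
     stmp_feasible N C B Pmax P tau tau0 a \<and>
     (\<forall>P' tau' tau0' a'. stmp_feasible N C B Pmax P' tau' tau0' a' \<longrightarrow>
        stmp_objective N W g P' tau' \<le> stmp_objective N W g P tau)"

definition rmax :: "real \<Rightarrow> (nat \<Rightarrow> real) \<Rightarrow> real \<Rightarrow> nat \<Rightarrow> real" where
  "rmax W g Pmax i = W * log 2 (1 + g i * Pmax)"

end

theory Submission
  imports Defs
begin

theorem corollary2:
  fixes N k :: nat and W Pmax :: real and g C B :: "nat \<Rightarrow> real"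
  assumes "W > 0" and "Pmax > 0"
    and "\<forall>i\<in>{1..N}. g i > 0 \<and> C i \<ge> 0 \<and> B i \<ge> 0"
    and "k \<in> {1..N}"
    and "rmax W g Pmax k = Max (rmax W g Pmax ` {1..N})"
    and "B k / (Pmax - C k) \<ge> 1"
  shows "\<exists>P tau tau0 a. stmp_optimal N W g C B Pmax P tau tau0 a \<and> tau k = 1"
proof -
  have pc: "Pmax - C k > 0"
  proof (rule ccontr)
    assume "\<not> Pmax - C k > 0"
    hence "B k / (Pmax - C k) \<le> 0" using assms(3,4)
      by (meson divide_nonneg_nonpos not_less)
    thus False using assms(6) by linarith
  qed
  hence bk: "B k \<ge> Pmax - C k" using assms(6) by (simp add: le_divide_eq)
  define P where "P = (\<lambda>i. if i = k then Pmax else 0)"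
  define tau where "tau = (\<lambda>i. if i = k then 1 else (0::real))"
  define a where "a = (\<lambda>i j::nat. if i < j then 1 else (0::real))"
  have feas: "stmp_feasible N C B Pmax P tau 0 a"
  proof -
    have t: "0 + (\<Sum>i\<in>{1..N}. tau i) \<le> 1"
      using assms(4) by (simp add: tau_def)
    have "\<forall>i\<in>{1..N}. P i \<ge> 0 \<and> tau i \<ge> 0 \<and> P i \<le> Pmax \<and>
        B i + C i * 0 + C i * (\<Sum>j\<in>{1..N} - {i}. a j i * tau j) + C i * tau i
          - P i * tau i \<ge> 0 \<and>
        (\<forall>j\<in>{1..N}. j \<noteq> i \<longrightarrow> a i j \<in> {0, 1} \<and> a i j + a j i = 1)"
    proof
    fix i assume i: "i \<in> {1..N}"
    have s: "(\<Sum>j\<in>{1..N} - {i}. a j i * tau j) \<ge> 0"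
      by (rule sum_nonneg) (simp add: a_def tau_def)
    have Ci: "C i \<ge> 0" "B i \<ge> 0" using assms(3) i by auto
    have "C i * (\<Sum>j\<in>{1..N} - {i}. a j i * tau j) \<ge> 0" using s Ci by simp
    moreover have "B i + C i * tau i - P i * tau i \<ge> 0"
      using bk Ci by (auto simp: P_def tau_def)
    ultimately show "P i \<ge> 0 \<and> tau i \<ge> 0 \<and> P i \<le> Pmax \<and>
        B i + C i * 0 + C i * (\<Sum>j\<in>{1..N} - {i}. a j i * tau j) + C i * tau i
          - P i * tau i \<ge> 0 \<and>
        (\<forall>j\<in>{1..N}. j \<noteq> i \<longrightarrow> a i j \<in> {0, 1} \<and> a i j + a j i = 1)"
      using assms(2) by (auto simp: P_def tau_def a_def)
    qed
    thus ?thesis using t unfolding stmp_feasible_def by simp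
  qed
  have obj: "stmp_objective N W g P tau = rmax W g Pmax k"
  proof -
    have "stmp_objective N W g P tau = (\<Sum>i\<in>{1..N}. if i = k then W * log 2 (1 + g k * Pmax) else 0)"
      unfolding stmp_objective_def by (rule sum.cong) (auto simp: P_def tau_def)
    also have "\<dots> = W * log 2 (1 + g k * Pmax)" using assms(4) by simp
    finally show ?thesis by (simp add: rmax_def)
  qed
  have rk: "rmax W g Pmax k \<ge> 0"
  proof -
    have "g k > 0" using assms(3,4) by auto
    hence "g k * Pmax > 0" using assms(2) by simp
    hence "log 2 (1 + g k * Pmax) \<ge> 0" by simp
    thus ?thesis using assms(1) by (simp add: rmax_def)
  qed
  have opt: "stmp_objective N W g P' tau' \<le> rmax W g Pmax k"
    if f: "stmp_feasible N C B Pmax P' tau' tau0' a'" for P' tau' tau0' a'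
  proof -
    have tm: "W * tau' i * log 2 (1 + g i * P' i) \<le> tau' i * rmax W g Pmax k"
      if i: "i \<in> {1..N}" for i
    proof -
      have h: "P' i \<ge> 0" "tau' i \<ge> 0" "P' i \<le> Pmax" "g i > 0"
        using f i assms(3) unfolding stmp_feasible_def by auto
      have "log 2 (1 + g i * P' i) \<le> log 2 (1 + g i * Pmax)"
      proof -
        have a1: "g i * P' i \<le> g i * Pmax" using h by (simp add: mult_left_mono)
        have a2: "0 \<le> g i * P' i" using h by simp
        show ?thesis using a1 a2 by (subst log_le_cancel_iff) auto
      qed
      hence "W * log 2 (1 + g i * P' i) \<le> rmax W g Pmax i"
        using assms(1) by (simp add: rmax_def)
      also have "\<dots> \<le> rmax W g Pmax k" using assms(5) i by simp
      finally have "W * log 2 (1 + g i * P' i) \<le> rmax W g Pmax k" .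
      hence "tau' i * (W * log 2 (1 + g i * P' i)) \<le> tau' i * rmax W g Pmax k"
        using h by (simp add: mult_left_mono)
      thus ?thesis by (simp add: algebra_simps)
    qed
    have "stmp_objective N W g P' tau' \<le> (\<Sum>i\<in>{1..N}. tau' i * rmax W g Pmax k)"
      unfolding stmp_objective_def by (rule sum_mono) (rule tm)
    also have "\<dots> = (\<Sum>i\<in>{1..N}. tau' i) * rmax W g Pmax k"
      by (simp add: sum_distrib_right)
    also have "\<dots> \<le> 1 * rmax W g Pmax k"
      using f rk unfolding stmp_feasible_def by (intro mult_right_mono) auto
    finally show ?thesis by simp
  qed
  show ?thesis
    by (rule exI[of _ P], rule exI[of _ tau], rule exI[of _ 0], rule exI[of _ a])
       (unfold stmp_optimal_def obj, intro conjI allI impI feas opt, assumption, simp add: tau_def)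
qed

end
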